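(* Let $g(u;a)=u(1-u)(u-a)$, $k>0$ and $a\in(0,1)$. Then: (i) If $d>0$ satisfies $d<\min\{\frac{a^2}{4k},\frac{(1-a)^2}{4}\}$ (which equals $\frac{a^2}{4k}$ if $a\le\frac{1}{1/\sqrt k+1}$ and $\frac{(1-a)^2}{4}$ if $a\ge\frac{1}{1/\sqrt k+1}$), then $c(a,d,k)=0$. (ii) Let $d_0(a,k):=\frac{1}{k+1}\min\{k\,d^+(a,k),\,d^-(a)\}$, where $d^-(a)=\max_{y\in(a,1)}\frac{g(y;a)}{y}$ and $d^+(a,k)=\max_{y\in(1-a,1)}\frac{-g(1-y;a)}{ky}$. Then for every $0<d<d_0(a,k)$ and every sequence $(s_i)_{i\in\mathbb Z}\subset\{0,1\}$ there is a function $\Phi:\mathbb R\to\mathbb R$ with $0=d(k\Phi(\xi+1)-(k+1)\Phi(\xi)+\Phi(\xi-1))+g(\Phi(\xi);a)$ for all $\xi\in\mathbb R$ and with $\Phi(i)\in[0,a)$ if $s_i=0$, $\Phi(i)\in(a,1]$ if $s_i=1$. In particular, for $0<d<d_0(a,k)$ there exist infinitely many bounded such solutions (solutions of the traveling wave equation with $c=0$). (iii) If $k>1$ and $d>\frac{a^2}{4(\sqrt k-1)^2}$, then $c(a,d,k)<0$.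
   Context: For $k>0$, $a\in(0,1)$, $d>0$ consider the traveling wave problem: find $c\in\mathbb R$ and $\Phi:\mathbb R\to\mathbb R$ with $$-c\Phi'(\xi)=d\big(k\Phi(\xi+1)-(k+1)\Phi(\xi)+\Phi(\xi-1)\big)+g(\Phi(\xi);a)\quad(\xi\in\mathbb R),\qquad \lim_{\xi\to-\infty}\Phi(\xi)=0,\ \lim_{\xi\to+\infty}\Phi(\xi)=1.$$ It is known (Mallet-Paret) that for bistable $g$ such as the cubic this problem has a solution with $\Phi$ non-decreasing and that $c$ is uniquely determined; it is denoted $c(a,d,k)$. *)

theory Defs
  imports "HOL-Analysis.Analysis"
begin

definition gcub :: "real \<Rightarrow> real \<Rightarrow> real" where
  "gcub u a = u * (1 - u) * (u - a)"

definition lat_rhs :: "real \<Rightarrow> real \<Rightarrow> real \<Rightarrow> (real \<Rightarrow> real) \<Rightarrow> real \<Rightarrow> real" where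
  "lat_rhs a d k \<Phi> \<xi> =
     d * (k * \<Phi> (\<xi> + 1) - (k + 1) * \<Phi> \<xi> + \<Phi> (\<xi> - 1)) + gcub (\<Phi> \<xi>) a"

text \<open>Monotone traveling wave (c, Phi) connecting 0 to 1. For c \<noteq> 0 the
  equation -c Phi' = RHS is required pointwise (Phi differentiable); for c = 0
  the equation reads 0 = RHS pointwise and Phi need not be differentiable
  (as in Mallet-Paret's theory, where Phi may be discontinuous when c = 0).\<close>
definition tw_solution :: "real \<Rightarrow> real \<Rightarrow> real \<Rightarrow> real \<Rightarrow> (real \<Rightarrow> real) \<Rightarrow> bool" where
  "tw_solution a d k c \<Phi> \<longleftrightarrow>
     mono \<Phi> \<and>
     (\<forall>\<xi>. if c = 0 then lat_rhs a d k \<Phi> \<xi> = 0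
           else (\<exists>D. (\<Phi> has_real_derivative D) (at \<xi>) \<and> - c * D = lat_rhs a d k \<Phi> \<xi>)) \<and>
     (\<Phi> \<longlongrightarrow> 0) at_bot \<and> (\<Phi> \<longlongrightarrow> 1) at_top"

definition d_minus :: "real \<Rightarrow> real" where
  "d_minus a = (SUP y\<in>{a<..<1}. gcub y a / y)"

definition d_plus :: "real \<Rightarrow> real \<Rightarrow> real" where
  "d_plus a k = (SUP y\<in>{1-a<..<1}. - gcub (1 - y) a / (k * y))"

definition d_zero :: "real \<Rightarrow> real \<Rightarrow> real" where
  "d_zero a k = (1 / (k + 1)) * min (k * d_plus a k) (d_minus a)"

end

theory Submission
  imports Defs
begin


lemma div_step:
  fixes k a b c :: real
  assumes "k > 0" "(k+1)*b \<le> k*c + a"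
  shows "c - b/k \<ge> b - a/k"
proof -
  have "c - b/k - (b - a/k) = (k*c + a - (k+1)*b)/k" using assms(1) by (simp add: field_simps)
  also have "\<dots> \<ge> 0" using assms by simp
  finally show ?thesis by simp
qed

lemma tail_lemma:
  fixes y :: "int \<Rightarrow> real" and k :: real and N :: int
  assumes k1: "k > 1"
    and yb: "\<forall>n. 0 \<le> y n \<and> y n \<le> 1"
    and B: "\<forall>n\<ge>N. (k+1) * y n \<le> k * y (n+1) + y (n-1)"
    and lim: "\<forall>e>0. \<exists>M. \<forall>n\<ge>M. y n < e"
    and nN: "n \<ge> N"
  shows "y (n+1) \<le> y n / k"
proof (rule ccontr)
  assume nt: "\<not> y (n+1) \<le> y n / k"
  define t where "t = y (n+1) - y n / k"
  have t0: "t > 0" using nt t_def by simp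
  have step: "y (n+1+int j) - y (n+int j)/k \<ge> t" for j :: nat
  proof (induction j)
    case 0 then show ?case by (simp add: t_def)
  next
    case (Suc j)
    define m where "m = n + 1 + int j"
    have "N \<le> m" using nN m_def by simp
    with B have "(k+1) * y m \<le> k * y (m+1) + y (m-1)" by blast
    then have "y (m+1) - y m / k \<ge> y m - y (m - 1) / k"
      using k1 div_step[of k "y m" "y (m+1)" "y (m-1)"] by simp
    moreover have e1: "m - 1 = n + int j" and e2: "n + 1 + int (Suc j) = m + 1" and e3: "n + int (Suc j) = m"
      and e4: "n + 1 + int j = m" using m_def by simp_all
    ultimately show ?case using Suc unfolding e2 e3 by (simp only: e1 e4)
  qed
  obtain M where M: "\<forall>m\<ge>M. y m < t" using lim t0 by blast
  define j where "j = nat (max 0 (M - n))"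
  have "n + 1 + int j \<ge> M" unfolding j_def by auto
  then have "y (n+1+int j) < t" using M by auto
  moreover have "y (n + int j) / k \<ge> 0" using yb k1 by auto
  ultimately show False using step[of j] by linarith
qed

lemma decay_lemma:
  fixes y :: "int \<Rightarrow> real" and k :: real and N :: int
  assumes k1: "k > 1"
    and tail: "\<And>n. n \<ge> N \<Longrightarrow> y (n+1) \<le> y n / k"
    and PN: "P \<ge> N"
  shows "y (P + int i) \<le> (1/k)^i * y P"
proof (induction i)
  case 0 then show ?case by simp
next
  case (Suc i)
  have "y (P + int i + 1) \<le> y (P + int i) / k" using tail[of "P + int i"] PN by auto
  also have "\<dots> \<le> (1/k)^i * y P / k" using Suc k1 by (simp add: divide_right_mono)
  also have "(1/k)^i * y P / k = (1/k)^(Suc i) * y P" by simp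
  finally have "y (P + int i + 1) \<le> (1/k)^(Suc i) * y P" .
  moreover have "P + int (Suc i) = P + int i + 1" by simp
  ultimately show ?case by (simp only:)
qed

lemma roots_lemma:
  fixes k \<beta> :: real
  assumes k1: "k > 1" and bb: "\<beta> > 2 * sqrt k"
  shows "\<exists>lp lm. k * (lp + lm) = \<beta> \<and> k * lp * lm = 1 \<and> lm > 0 \<and> lm < 1 \<and> lp > 0 \<and> k * lp > 1"
proof -
  define D where "D = \<beta>^2 - 4*k"
  have sk: "sqrt k ^ 2 = k" using k1 by simp
  have sk1: "sqrt k > 1" using k1 by simp
  have b0: "\<beta> > 0" using bb sk1 by linarith
  have "(2 * sqrt k)^2 < \<beta>^2" using bb sk1 by (intro power_strict_mono) auto
  moreover have "(2 * sqrt k)^2 = 4 * k" using sk by (simp add: power_mult_distrib)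
  ultimately have D0: "D > 0" unfolding D_def by simp
  define s where "s = sqrt D"
  have s0: "s > 0" and s2: "s^2 = D" using D0 by (auto simp: s_def)
  have sb: "s < \<beta>"
  proof -
    have "s^2 < \<beta>^2" using s2 D_def k1 by simp
    then show ?thesis using b0 s0 power_less_imp_less_base by (metis less_le)
  qed
  define lp where "lp = (\<beta> + s) / (2*k)"
  define lm where "lm = (\<beta> - s) / (2*k)"
  have sum: "k * (lp + lm) = \<beta>" unfolding lp_def lm_def using k1 by (simp add: field_simps)
  have "4 * k * (k * lp * lm) = (\<beta> + s) * (\<beta> - s)" unfolding lp_def lm_def using k1
    by (simp add: field_simps)
  also have "(\<beta> + s) * (\<beta> - s) = \<beta>^2 - s^2" by (simp add: algebra_simps power2_eq_square)
  also have "\<dots> = 4 * k" using s2 D_def by simp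
  finally have "4 * k * (k * lp * lm) = 4 * k * 1" using k1 by simp
  then have prod: "k * lp * lm = 1" using k1 by simp
  have lm0: "lm > 0" unfolding lm_def using sb k1 by simp
  have lmlp: "lm \<le> lp" unfolding lp_def lm_def using s0 k1 by (simp add: divide_right_mono)
  have lp0: "lp > 0" using lm0 lmlp by simp
  have klp: "k * lp > 1"
  proof -
    have "k * lp = (\<beta> + s)/2" unfolding lp_def using k1 by simp
    also have "\<dots> > sqrt k" using bb s0 by simp
    finally show ?thesis using sk1 by linarith
  qed
  have lm1: "lm < 1"
  proof (rule ccontr)
    assume "\<not> lm < 1"
    then have "lm \<ge> 1" by simp
    then have "lp \<ge> 1" using lmlp by simp
    then have "k * lp * lm \<ge> k * 1 * 1" using k1 \<open>lm \<ge> 1\<close> by (intro mult_mono) auto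
    then show False using prod k1 by simp
  qed
  show ?thesis using sum prod lm0 lm1 lp0 klp by blast
qed

lemma seq_contra:
  fixes y :: "int \<Rightarrow> real" and k \<beta> :: real and N :: int
  assumes k1: "k > 1" and bb: "\<beta> > 2 * sqrt k"
    and yb: "\<forall>n. 0 \<le> y n \<and> y n \<le> 1"
    and A: "\<forall>n. \<beta> * y n \<le> k * y (n+1) + y (n-1)"
    and B: "\<forall>n\<ge>N. (k+1) * y n \<le> k * y (n+1) + y (n-1)"
    and lim: "\<forall>e>0. \<exists>M. \<forall>n\<ge>M. y n < e"
    and pos: "y 0 > 0"
  shows False
proof -
  have tail: "y (n+1) \<le> y n / k" if "n \<ge> N" for n
    using tail_lemma[OF k1 yb B lim that] .
  obtain lp lm where sum: "k * (lp + lm) = \<beta>" and prod: "k * lp * lm = 1" and lm0: "lm > 0"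
    and lm1: "lm < 1" and lp0: "lp > 0" and klp: "k * lp > 1"
    using roots_lemma[OF k1 bb] by blast
  define T where "T n = y (n+1) - lm * y n" for n
  have Trec: "T n \<ge> lp * T (n-1)" for n
  proof -
    have e: "k * y (n+1) - \<beta> * y n + y (n-1) = k * (T n - lp * T (n-1))"
      unfolding T_def sum[symmetric] using prod by (simp add: algebra_simps)
    have "\<beta> * y n \<le> k * y (n+1) + y (n-1)" using A by blast
    then have "k * (T n - lp * T (n-1)) \<ge> 0" using e by linarith
    then show ?thesis using k1 by (simp add: zero_le_mult_iff)
  qed
  have Tgrow: "T (m + int j) \<ge> lp^j * T m" for m :: int and j :: nat
  proof (induction j)
    case 0 then show ?case by simp
  next
    case (Suc j)
    have "T (m + int (Suc j)) \<ge> lp * T (m + int (Suc j) - 1)" by (rule Trec)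
    moreover have "m + int (Suc j) - 1 = m + int j" by simp
    moreover have "lp * T (m + int j) \<ge> lp * (lp^j * T m)" using Suc lp0 by (simp add: mult_left_mono)
    ultimately show ?case by (simp add: mult.assoc)
  qed
  have Tnp: "T m \<le> 0" for m :: int
  proof (rule ccontr)
    assume "\<not> T m \<le> 0"
    then have Tm: "T m > 0" by simp
    define P where "P = max m N"
    define j0 where "j0 = nat (P - m)"
    have Pm: "P = m + int j0" unfolding j0_def P_def by simp
    have PN: "P \<ge> N" unfolding P_def by simp
    define c where "c = T P"
    have "lp^j0 * T m > 0" using Tm lp0 by simp
    then have c0: "c > 0" unfolding c_def Pm using Tgrow[where m=m and j=j0] by linarith
    have "(k*lp)^i * c \<le> 1" for i
    proof -
      have "lp^i * c \<le> T (P + int i)" unfolding c_def using Tgrow by simp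
      also have "\<dots> \<le> y (P + int i + 1)" unfolding T_def using lm0 yb
        by (simp add: add.commute add.left_commute)
      also have "\<dots> = y (P + int (Suc i))" by (simp add: algebra_simps)
      also have "\<dots> \<le> (1/k)^(Suc i) * y P" using decay_lemma[where y=y and N=N and P=P and k=k, OF k1 tail PN] by blast
      also have "\<dots> \<le> (1/k)^i" 
      proof -
        have "(1/k)^(Suc i) \<le> (1/k)^i" using k1 by (intro power_decreasing) auto
        moreover have "y P \<le> 1" "y P \<ge> 0" using yb by auto
        moreover have "(1/k)^(Suc i) \<ge> 0" using k1 by simp
        ultimately show ?thesis by (meson dual_order.trans mult_left_le)
      qed
      finally have "lp^i * c \<le> (1/k)^i" .
      then have "k^i * (lp^i * c) \<le> k^i * (1/k)^i" using k1 by (simp add: mult_left_mono)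
      moreover have "k^i * (1/k)^i = 1" using k1 by (simp add: power_one_over)
      moreover have "k^i * (lp^i * c) = (k*lp)^i * c" by (simp add: power_mult_distrib mult.assoc)
      ultimately show ?thesis by simp
    qed
    moreover obtain i where "1/c < (k*lp)^i" using real_arch_pow[OF klp] by blast
    then have "1 < (k*lp)^i * c" using c0 by (simp add: field_simps)
    ultimately show False by (metis not_le)
  qed
  have bk: "y 0 \<le> lm^j * y (- int j)" for j :: nat
  proof (induction j)
    case 0 then show ?case by simp
  next
    case (Suc j)
    have "T (- int j - 1) \<le> 0" by (rule Tnp)
    then have "y (- int j) \<le> lm * y (- int j - 1)" unfolding T_def by simp
    have eqY: "y (- int j - 1) = y (- int (Suc j))" by (rule arg_cong[where f=y]) simp
    have "y 0 \<le> lm^j * y (- int j)" by (rule Suc)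
    also have "\<dots> \<le> lm^j * (lm * y (- int j - 1))" using lm0 \<open>y (- int j) \<le> lm * y (- int j - 1)\<close>
      by (simp add: mult_left_mono)
    also have "\<dots> = lm^(Suc j) * y (- int (Suc j))" unfolding eqY by (simp only: power_Suc mult_ac)
    finally show ?case .
  qed
  obtain j where "lm^j < y 0" using real_arch_pow_inv[OF pos lm1] by blast
  moreover have "lm^j * y (- int j) \<le> lm^j" using yb lm0 by (simp add: mult_left_le)
  ultimately show False using bk[of j] by simp
qed



lemma bounds01:
  fixes \<Phi> :: "real \<Rightarrow> real"
  assumes m: "mono \<Phi>" and l0: "(\<Phi> \<longlongrightarrow> 0) at_bot" and l1: "(\<Phi> \<longlongrightarrow> 1) at_top"
  shows "0 \<le> \<Phi> x \<and> \<Phi> x \<le> 1"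
proof
  have "\<forall>t\<le>x. \<Phi> t \<le> \<Phi> x" using m unfolding mono_def by blast
  then have "eventually (\<lambda>t. \<Phi> t \<le> \<Phi> x) at_bot"
    unfolding eventually_at_bot_linorder by blast
  then show "0 \<le> \<Phi> x" using tendsto_upperbound[OF l0] by auto
  have "\<forall>t\<ge>x. \<Phi> x \<le> \<Phi> t" using m unfolding mono_def by blast
  then have "eventually (\<lambda>t. \<Phi> x \<le> \<Phi> t) at_top"
    unfolding eventually_at_top_linorder by blast
  then show "\<Phi> x \<le> 1" using tendsto_lowerbound[OF l1] by auto
qed

lemma deriv_mono_nonneg:
  fixes f :: "real \<Rightarrow> real"
  assumes "mono f" "(f has_real_derivative D) (at x)"
  shows "0 \<le> D"
proof (rule ccontr)
  assume "\<not> 0 \<le> D"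
  then obtain e where "e > 0" "\<forall>h>0. h < e \<longrightarrow> f x > f (x + h)"
    using DERIV_neg_dec_right[OF assms(2)] by auto
  then have "f x > f (x + e/2)" by auto
  moreover have "x \<le> x + e/2" using \<open>e>0\<close> by simp
  then have "f x \<le> f (x + e/2)" using assms(1) unfolding mono_def by blast
  ultimately show False by linarith
qed

lemma hit_value:
  fixes \<Phi> :: "real \<Rightarrow> real"
  assumes l0: "(\<Phi> \<longlongrightarrow> 0) at_bot" and l1: "(\<Phi> \<longlongrightarrow> 1) at_top"
    and cont: "\<And>x. isCont \<Phi> x" and u: "0 < u" "u < 1"
  shows "\<exists>\<xi>. \<Phi> \<xi> = u"
proof -
  have "eventually (\<lambda>t. \<Phi> t < u) at_bot" using order_tendstoD(2)[OF l0] u by auto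
  then obtain N1 where N1: "\<forall>t\<le>N1. \<Phi> t < u" unfolding eventually_at_bot_linorder by blast
  have "eventually (\<lambda>t. \<Phi> t > u) at_top" using order_tendstoD(1)[OF l1] u by auto
  then obtain N2 where N2: "\<forall>t\<ge>N2. \<Phi> t > u" unfolding eventually_at_top_linorder by blast
  have "\<Phi> (min N1 N2) \<le> u" using N1 by (metis less_imp_le min.cobounded1)
  moreover have "u \<le> \<Phi> (max N1 N2)" using N2 by (metis less_imp_le max.cobounded2)
  moreover have "min N1 N2 \<le> max N1 N2" by simp
  ultimately show ?thesis using IVT[of \<Phi> "min N1 N2" u "max N1 N2"] cont by blast
qed

lemma part1:
  fixes a k d c :: real
  assumes k0: "k > 0" and a0: "0 < a" and a1: "a < 1" and d0: "0 < d"
    and dlt: "d < min (a^2 / (4 * k)) ((1 - a)^2 / 4)"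
    and tw: "tw_solution a d k c \<Phi>"
  shows "c = 0"
proof (rule ccontr)
  assume c0: "c \<noteq> 0"
  have m: "mono \<Phi>" and l0: "(\<Phi> \<longlongrightarrow> 0) at_bot" and l1: "(\<Phi> \<longlongrightarrow> 1) at_top"
    and eqn: "\<And>\<xi>. \<exists>D. (\<Phi> has_real_derivative D) (at \<xi>) \<and> - c * D = lat_rhs a d k \<Phi> \<xi>"
    using tw c0 unfolding tw_solution_def by auto
  have b: "0 \<le> \<Phi> x \<and> \<Phi> x \<le> 1" for x using bounds01[OF m l0 l1] .
  have cont: "isCont \<Phi> x" for x
  proof -
    obtain D where "(\<Phi> has_real_derivative D) (at x)" using eqn[of x] by blast
    then show ?thesis by (rule DERIV_isCont)
  qed
  show False
  proof (cases "c > 0")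
    case True
    define u where "u = (1 + a) / 2"
    have u0: "0 < u" "u < 1" using a0 a1 by (auto simp: u_def)
    obtain \<xi> where xi: "\<Phi> \<xi> = u" using hit_value[OF l0 l1 cont u0] by blast
    obtain D where D: "(\<Phi> has_real_derivative D) (at \<xi>)" "- c * D = lat_rhs a d k \<Phi> \<xi>"
      using eqn by blast
    have "D \<ge> 0" using deriv_mono_nonneg[OF m D(1)] .
    then have "c * D \<ge> 0" using True by simp
    then have le: "lat_rhs a d k \<Phi> \<xi> \<le> 0" using D(2) by linarith
    have "\<xi> \<le> \<xi> + 1" by simp
    then have p: "\<Phi> (\<xi> + 1) \<ge> u" using m xi unfolding mono_def by blast
    have q: "\<Phi> (\<xi> - 1) \<ge> 0" using b by blast
    have "k * \<Phi> (\<xi> + 1) \<ge> k * u" using p k0 by (simp add: mult_left_mono)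
    then have "k * \<Phi> (\<xi> + 1) - (k + 1) * u + \<Phi> (\<xi> - 1) \<ge> -u"
      using q by (simp add: algebra_simps)
    then have "d * (k * \<Phi> (\<xi> + 1) - (k + 1) * u + \<Phi> (\<xi> - 1)) \<ge> d * (-u)"
      by (rule mult_left_mono) (use d0 in simp)
    moreover have "gcub u a = u * ((1 - a)^2 / 4)"
    proof -
      have e1: "1 - u = (1 - a) / 2" and e2: "u - a = (1 - a) / 2" unfolding u_def by (simp_all add: field_simps)
      show ?thesis unfolding gcub_def e1 e2 by (simp add: power2_eq_square field_simps)
    qed
    moreover have "d * u < u * ((1 - a)^2 / 4)"
    proof -
      have "d < (1-a)^2/4" using dlt by simp
      then have "d * u < ((1-a)^2/4) * u" by (rule mult_strict_right_mono) (use u0 in simp)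
      then show ?thesis by (simp add: mult.commute)
    qed
    ultimately have "lat_rhs a d k \<Phi> \<xi> > 0" unfolding lat_rhs_def xi by linarith
    then show False using le by simp
  next
    case False
    then have cneg: "c < 0" using c0 by simp
    define u where "u = a / 2"
    have u0: "0 < u" "u < 1" using a0 a1 by (auto simp: u_def)
    obtain \<xi> where xi: "\<Phi> \<xi> = u" using hit_value[OF l0 l1 cont u0] by blast
    obtain D where D: "(\<Phi> has_real_derivative D) (at \<xi>)" "- c * D = lat_rhs a d k \<Phi> \<xi>"
      using eqn by blast
    have "D \<ge> 0" using deriv_mono_nonneg[OF m D(1)] .
    then have "c * D \<le> 0" using cneg by (simp add: mult_nonpos_nonneg)
    then have ge: "lat_rhs a d k \<Phi> \<xi> \<ge> 0" using D(2) by linarith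
    have p: "\<Phi> (\<xi> + 1) \<le> 1" using b by blast
    have "\<xi> - 1 \<le> \<xi>" by simp
    then have q: "\<Phi> (\<xi> - 1) \<le> u" using m xi unfolding mono_def by blast
    have "k * \<Phi> (\<xi> + 1) \<le> k * 1" using p k0 by (simp add: mult_left_mono)
    then have "k * \<Phi> (\<xi> + 1) - (k + 1) * u + \<Phi> (\<xi> - 1) \<le> k * (1 - u)"
      using q by (simp add: algebra_simps)
    then have "d * (k * \<Phi> (\<xi> + 1) - (k + 1) * u + \<Phi> (\<xi> - 1)) \<le> d * (k * (1 - u))"
      by (rule mult_left_mono) (use d0 in simp)
    moreover have "gcub u a = - (1 - u) * (a^2 / 4)"
    proof -
      have e1: "u - a = - (a / 2)" unfolding u_def by (simp add: field_simps)
      show ?thesis unfolding gcub_def e1 by (simp add: power2_eq_square u_def field_simps)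
    qed
    moreover have "d * (k * (1 - u)) < (1 - u) * (a^2 / 4)"
    proof -
      have "d < a^2 / (4 * k)" using dlt by simp
      then have "d * k < a^2 / 4" using k0 by (simp add: pos_less_divide_eq mult.commute)
      then have "(d * k) * (1 - u) < (a^2/4) * (1 - u)" by (rule mult_strict_right_mono) (use u0 in simp)
      then show ?thesis by (simp only: mult_ac)
    qed
    ultimately have "lat_rhs a d k \<Phi> \<xi> < 0" unfolding lat_rhs_def xi by linarith
    then show False using ge by simp
  qed
qed



lemma g_lower:
  fixes u a :: real
  assumes "u \<le> 1"
  shows "gcub u a \<ge> - (a^2/4) * (1 - u)"
proof -
  have "gcub u a + (a^2/4) * (1 - u) = (1 - u) * (u - a/2)^2"
    unfolding gcub_def by (simp add: algebra_simps power2_eq_square)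
  moreover have "(1 - u) * (u - a/2)^2 \<ge> 0" using assms by simp
  ultimately show ?thesis by linarith
qed

lemma g_nonneg:
  fixes u a :: real
  assumes "0 \<le> a" "a \<le> u" "u \<le> 1"
  shows "gcub u a \<ge> 0"
proof -
  have "0 \<le> u" using assms by linarith
  moreover have "0 \<le> 1 - u" "0 \<le> u - a" using assms by simp_all
  ultimately show ?thesis unfolding gcub_def by simp
qed

lemma lin_aux0:
  fixes d k p u q B :: real
  assumes d0: "d > 0" and h: "d * (k * p - (k + 1) * u + q) \<le> (d * B) * (1 - u)"
  shows "(k + 1 - B) * (1 - u) \<le> k * (1 - p) + (1 - q)"
proof -
  have "d * ((k + 1 - B) * (1 - u)) - d * (k * (1 - p) + (1 - q))
        = d * (k * p - (k + 1) * u + q) - (d * B) * (1 - u)"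
    by (simp add: algebra_simps)
  also have "\<dots> \<le> 0" using h by simp
  finally have "d * ((k + 1 - B) * (1 - u)) \<le> d * (k * (1 - p) + (1 - q))" by simp
  then show ?thesis using d0 by simp
qed

lemma lin_aux:
  fixes d k p u q A :: real
  assumes d0: "d > 0" and h: "d * (k * p - (k + 1) * u + q) \<le> A * (1 - u)"
  shows "(k + 1 - A / d) * (1 - u) \<le> k * (1 - p) + (1 - q)"
proof -
  have "d * (A / d) = A" using d0 by simp
  then show ?thesis using lin_aux0[OF d0, of k p u q "A / d"] h by simp
qed

lemma beta_big:
  fixes k a d :: real
  assumes k1: "k > 1" and a0: "0 < a" and dgt: "d > a^2 / (4 * (sqrt k - 1)^2)"
  shows "d > 0" and "k + 1 - a^2 / (4 * d) > 2 * sqrt k"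
proof -
  have sk1: "sqrt k > 1" using k1 by simp
  have pos: "4 * (sqrt k - 1)^2 > 0" using sk1 by simp
  have "a^2 / (4 * (sqrt k - 1)^2) > 0" using a0 pos by simp
  then show d0: "d > 0" using dgt by linarith
  have "a^2 < d * (4 * (sqrt k - 1)^2)" using dgt pos by (simp add: pos_divide_less_eq)
  then have "a^2 / (4 * d) < (sqrt k - 1)^2" using d0 by (simp add: divide_less_eq mult_ac)
  moreover have "(sqrt k - 1)^2 = k - 2 * sqrt k + 1"
    using k1 by (simp add: power2_eq_square algebra_simps)
  ultimately show "k + 1 - a^2 / (4 * d) > 2 * sqrt k" by linarith
qed

lemma part3:
  fixes a k d c :: real
  assumes k1: "k > 1" and a0: "0 < a" and a1: "a < 1"
    and dgt: "d > a^2 / (4 * (sqrt k - 1)^2)"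
    and tw: "tw_solution a d k c \<Phi>"
  shows "c < 0"
proof (rule ccontr)
  assume "\<not> c < 0"
  then have cnn: "c \<ge> 0" by simp
  have d0: "d > 0" and bb: "k + 1 - a^2 / (4 * d) > 2 * sqrt k" using beta_big[OF k1 a0 dgt] by auto
  have m: "mono \<Phi>" and l0: "(\<Phi> \<longlongrightarrow> 0) at_bot" and l1: "(\<Phi> \<longlongrightarrow> 1) at_top"
    and eqn: "\<And>\<xi>. if c = 0 then lat_rhs a d k \<Phi> \<xi> = 0
           else (\<exists>D. (\<Phi> has_real_derivative D) (at \<xi>) \<and> - c * D = lat_rhs a d k \<Phi> \<xi>)"
    using tw unfolding tw_solution_def by auto
  have b: "0 \<le> \<Phi> x \<and> \<Phi> x \<le> 1" for x using bounds01[OF m l0 l1] .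
  have rle: "lat_rhs a d k \<Phi> \<xi> \<le> 0" for \<xi>
  proof (cases "c = 0")
    case True then show ?thesis using eqn[of \<xi>] by simp
  next
    case False
    then obtain D where D: "(\<Phi> has_real_derivative D) (at \<xi>)" "- c * D = lat_rhs a d k \<Phi> \<xi>"
      using eqn[of \<xi>] by auto
    have "D \<ge> 0" using deriv_mono_nonneg[OF m D(1)] .
    then have "c * D \<ge> 0" using cnn by simp
    then show ?thesis using D(2) by linarith
  qed
  have "eventually (\<lambda>t. \<Phi> t < 1) at_bot" using order_tendstoD(2)[OF l0] by simp
  then obtain \<xi>0 where x0: "\<Phi> \<xi>0 < 1" unfolding eventually_at_bot_linorder by auto
  define y where "y n = 1 - \<Phi> (\<xi>0 + of_int n)" for n :: int
  define \<beta> where "\<beta> = k + 1 - a^2 / (4 * d)"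
  have shift: "\<xi>0 + of_int (n + 1) = (\<xi>0 + of_int n) + 1" "\<xi>0 + of_int (n - 1) = (\<xi>0 + of_int n) - 1"
    for n :: int by simp_all
  have yb: "\<forall>n. 0 \<le> y n \<and> y n \<le> 1" unfolding y_def using b by (simp add: algebra_simps)
  have A: "\<forall>n. \<beta> * y n \<le> k * y (n+1) + y (n-1)"
  proof
    fix n :: int
    define \<xi> where "\<xi> = \<xi>0 + of_int n"
    have "d * (k * \<Phi> (\<xi> + 1) - (k + 1) * \<Phi> \<xi> + \<Phi> (\<xi> - 1)) + gcub (\<Phi> \<xi>) a \<le> 0"
      using rle[of \<xi>] unfolding lat_rhs_def .
    moreover have "gcub (\<Phi> \<xi>) a \<ge> - (a^2/4) * (1 - \<Phi> \<xi>)" using g_lower b by blast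
    ultimately have "d * (k * \<Phi> (\<xi> + 1) - (k + 1) * \<Phi> \<xi> + \<Phi> (\<xi> - 1)) \<le> (a^2/4) * (1 - \<Phi> \<xi>)"
      by linarith
    from lin_aux[OF d0 this] have "(k + 1 - (a^2/4) / d) * (1 - \<Phi> \<xi>) \<le> k * (1 - \<Phi> (\<xi> + 1)) + (1 - \<Phi> (\<xi> - 1))" .
    moreover have "(a^2/4) / d = a^2 / (4 * d)" by simp
    ultimately show "\<beta> * y n \<le> k * y (n+1) + y (n-1)"
      unfolding y_def \<beta>_def shift \<xi>_def by simp
  qed
  have "eventually (\<lambda>t. \<Phi> t > a) at_top" using order_tendstoD(1)[OF l1] a1 by simp
  then obtain X where X: "\<forall>t\<ge>X. \<Phi> t > a" unfolding eventually_at_top_linorder by auto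
  define N where "N = \<lceil>X - \<xi>0\<rceil>"
  have B: "\<forall>n\<ge>N. (k+1) * y n \<le> k * y (n+1) + y (n-1)"
  proof (intro allI impI)
    fix n :: int assume "n \<ge> N"
    define \<xi> where "\<xi> = \<xi>0 + of_int n"
    have "of_int n \<ge> X - \<xi>0" using \<open>n \<ge> N\<close> unfolding N_def by linarith
    then have "\<xi> \<ge> X" unfolding \<xi>_def by simp
    then have "\<Phi> \<xi> > a" using X by simp
    then have "gcub (\<Phi> \<xi>) a \<ge> 0" using g_nonneg[of a "\<Phi> \<xi>"] a0 b by (simp add: less_imp_le)
    moreover have "d * (k * \<Phi> (\<xi> + 1) - (k + 1) * \<Phi> \<xi> + \<Phi> (\<xi> - 1)) + gcub (\<Phi> \<xi>) a \<le> 0"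
      using rle[of \<xi>] unfolding lat_rhs_def .
    ultimately have "d * (k * \<Phi> (\<xi> + 1) - (k + 1) * \<Phi> \<xi> + \<Phi> (\<xi> - 1)) \<le> 0 * (1 - \<Phi> \<xi>)"
      by linarith
    from lin_aux[OF d0 this] have "(k + 1 - 0 / d) * (1 - \<Phi> \<xi>) \<le> k * (1 - \<Phi> (\<xi> + 1)) + (1 - \<Phi> (\<xi> - 1))" .
    then show "(k+1) * y n \<le> k * y (n+1) + y (n-1)"
      unfolding y_def shift \<xi>_def by simp
  qed
  have lim: "\<forall>e>0. \<exists>M. \<forall>n\<ge>M. y n < e"
  proof (intro allI impI)
    fix e :: real assume "e > 0"
    have "eventually (\<lambda>t. \<Phi> t > 1 - e) at_top" using order_tendstoD(1)[OF l1] \<open>e>0\<close> by simp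
    then obtain X' where X': "\<forall>t\<ge>X'. \<Phi> t > 1 - e" unfolding eventually_at_top_linorder by auto
    show "\<exists>M. \<forall>n\<ge>M. y n < e"
    proof (intro exI allI impI)
      fix n :: int assume "n \<ge> \<lceil>X' - \<xi>0\<rceil>"
      then have "of_int n \<ge> X' - \<xi>0" by linarith
      then have "\<xi>0 + of_int n \<ge> X'" by simp
      then show "y n < e" using X' unfolding y_def by fastforce
    qed
  qed
  have pos: "y 0 > 0" unfolding y_def using x0 by simp
  show False using seq_contra[OF k1 bb[folded \<beta>_def] yb A B lim pos] .
qed



definition Rs :: "real \<Rightarrow> real \<Rightarrow> real \<Rightarrow> (int \<Rightarrow> real) \<Rightarrow> int \<Rightarrow> real" where
  "Rs a d k x i = d * (k * x (i + 1) - (k + 1) * x i + x (i - 1)) + gcub (x i) a"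

lemma Rs_split:
  "Rs a d k x i = d * k * x (i + 1) + d * x (i - 1) + (gcub (x i) a - d * (k + 1) * x i)"
  unfolding Rs_def by (simp add: algebra_simps)

lemma g_lip:
  fixes u v a :: real
  assumes "0 \<le> u" "u \<le> 1" "0 \<le> v" "v \<le> 1" "0 < a" "a < 1"
  shows "\<bar>gcub v a - gcub u a\<bar> \<le> 4 * \<bar>v - u\<bar>"
proof -
  define Q where "Q = - (v * v + v * u + u * u) + (1 + a) * (v + u) - a"
  have e: "gcub v a - gcub u a = (v - u) * Q" unfolding gcub_def Q_def by (simp add: algebra_simps)
  have "v * v \<le> 1" "v * u \<le> 1" "u * u \<le> 1" using assms by (simp_all add: mult_le_one)
  moreover have "v * v \<ge> 0" "v * u \<ge> 0" "u * u \<ge> 0" using assms by simp_all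
  moreover have "a * v \<le> 1" "a * u \<le> 1" "a * v \<ge> 0" "a * u \<ge> 0" using assms by (simp_all add: mult_le_one)
  moreover have "(1 + a) * (v + u) = v + u + a * v + a * u" by (simp add: algebra_simps)
  ultimately have "\<bar>Q\<bar> \<le> 4" unfolding Q_def using assms by linarith
  then have "\<bar>v - u\<bar> * \<bar>Q\<bar> \<le> \<bar>v - u\<bar> * 4" by (simp add: mult_left_mono)
  then show ?thesis unfolding e abs_mult by simp
qed

lemma h_lip:
  fixes u v a d k :: real
  assumes "0 \<le> u" "u \<le> 1" "0 \<le> v" "v \<le> 1" "0 < a" "a < 1" "d > 0" "k > 0"
  shows "\<bar>(gcub v a - d * (k + 1) * v) - (gcub u a - d * (k + 1) * u)\<bar> \<le> (4 + d * (k + 1)) * \<bar>v - u\<bar>"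
proof -
  have "\<bar>(gcub v a - d * (k + 1) * v) - (gcub u a - d * (k + 1) * u)\<bar>
      \<le> \<bar>gcub v a - gcub u a\<bar> + \<bar>d * (k + 1) * (v - u)\<bar>" by (simp add: algebra_simps abs_triangle_ineq4)
  also have "\<bar>d * (k + 1) * (v - u)\<bar> = d * (k + 1) * \<bar>v - u\<bar>" using assms by (simp add: abs_mult)
  finally show ?thesis using g_lip[OF assms(1-6)] by (simp add: algebra_simps)
qed

lemma Rs_mono:
  assumes "d \<ge> 0" "k \<ge> 0" "x j = z j" "x (j + 1) \<le> z (j + 1)" "x (j - 1) \<le> z (j - 1)"
  shows "Rs a d k x j \<le> Rs a d k z j"
proof -
  have "d * k * x (j + 1) \<le> d * k * z (j + 1)" using assms by (simp add: mult_left_mono)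
  moreover have "d * x (j - 1) \<le> d * z (j - 1)" using assms by (simp add: mult_left_mono)
  ultimately show ?thesis unfolding Rs_split assms(3) by linarith
qed

lemma perron:
  fixes lo hi :: "int \<Rightarrow> real" and a d k :: real
  assumes d0: "d > 0" and k0: "k > 0" and a0: "0 < a" and a1: "a < 1"
    and lh: "\<forall>i. 0 \<le> lo i \<and> lo i \<le> hi i \<and> hi i \<le> 1"
    and sub: "\<forall>i. Rs a d k lo i \<ge> 0" and sup: "\<forall>i. Rs a d k hi i \<le> 0"
  shows "\<exists>x. \<forall>i. lo i \<le> x i \<and> x i \<le> hi i \<and> Rs a d k x i = 0"
proof -
  define P where "P = {x. (\<forall>i. lo i \<le> x i \<and> x i \<le> hi i) \<and> (\<forall>i. Rs a d k x i \<ge> 0)}"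
  have loP: "lo \<in> P" unfolding P_def using lh sub by auto
  have Pne: "P \<noteq> {}" using loP by auto
  define xs where "xs i = (SUP x\<in>P. x i)" for i
  have bdd: "bdd_above ((\<lambda>x. x i) ` P)" for i
    by (rule bdd_aboveI[of _ "hi i"]) (auto simp: P_def)
  have upper: "x i \<le> xs i" if "x \<in> P" for x i
    unfolding xs_def using bdd that by (rule cSUP_upper2) simp
  have xs_hi: "xs i \<le> hi i" for i
    unfolding xs_def using Pne by (rule cSUP_least) (auto simp: P_def)
  have lo_xs: "lo i \<le> xs i" for i using upper[OF loP] .
  define H where "H u = gcub u a - d * (k + 1) * u" for u
  define M where "M = 4 + d * (k + 1)"
  have M0: "M > 0" unfolding M_def using d0 k0 by (simp add: add_pos_nonneg)
  have Hlip: "\<bar>H v - H u\<bar> \<le> M * \<bar>v - u\<bar>" if "0 \<le> u" "u \<le> 1" "0 \<le> v" "v \<le> 1" for u v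
    unfolding H_def M_def using h_lip[OF that a0 a1 d0 k0] .
  have RH: "Rs a d k x i = d * k * x (i + 1) + d * x (i - 1) + H (x i)" for x i
    unfolding Rs_split H_def ..
  have inP: "0 \<le> x i \<and> x i \<le> 1" if "x \<in> P" for x i
    using that lh unfolding P_def by (smt (verit) mem_Collect_eq)
  have xs01: "0 \<le> xs i \<and> xs i \<le> 1" for i using lo_xs[of i] xs_hi[of i] lh by (smt (verit))
  have sub_xs: "Rs a d k xs i \<ge> 0" for i
  proof (rule ccontr)
    assume "\<not> Rs a d k xs i \<ge> 0"
    then have r: "Rs a d k xs i < 0" by simp
    define \<delta> where "\<delta> = - Rs a d k xs i / M"
    have \<delta>0: "\<delta> > 0" unfolding \<delta>_def using r M0 by (intro divide_pos_pos) auto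
    have "xs i - \<delta> < xs i" using \<delta>0 by simp
    then obtain x where xP: "x \<in> P" and xi: "xs i - \<delta> < x i"
      unfolding xs_def[of i] using less_cSUP_iff[OF Pne bdd[of i]] by auto
    have "x i \<le> xs i" using upper[OF xP] .
    have "\<bar>H (xs i) - H (x i)\<bar> \<le> M * \<bar>xs i - x i\<bar>"
      using Hlip[of "x i" "xs i"] inP[OF xP, of i] xs01[of i] by simp
    then have "\<bar>H (xs i) - H (x i)\<bar> \<le> M * (xs i - x i)" using \<open>x i \<le> xs i\<close> by simp
    then have hx: "H (x i) \<le> H (xs i) + M * (xs i - x i)" unfolding abs_le_iff by linarith
    have "M * (xs i - x i) < M * \<delta>" using xi M0 by simp
    also have "M * \<delta> = - Rs a d k xs i" unfolding \<delta>_def using M0 by simp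
    finally have hm: "M * (xs i - x i) < - Rs a d k xs i" .
    have "d * k * x (i + 1) \<le> d * k * xs (i + 1)"
      using upper[OF xP, of "i+1"] d0 k0 by (simp add: mult_left_mono)
    moreover have "d * x (i - 1) \<le> d * xs (i - 1)"
      using upper[OF xP, of "i-1"] d0 by (simp add: mult_left_mono)
    ultimately have "Rs a d k x i < 0" unfolding RH[of x] using hx hm RH[of xs i] by linarith
    moreover have "Rs a d k x i \<ge> 0" using xP unfolding P_def by blast
    ultimately show False by simp
  qed
  have xsP: "xs \<in> P" unfolding P_def using lo_xs xs_hi sub_xs by auto
  have eq: "Rs a d k xs i = 0" for i
  proof (rule ccontr)
    assume "Rs a d k xs i \<noteq> 0"
    then have r: "Rs a d k xs i > 0" using sub_xs[of i] by simp
    have lt: "xs i < hi i"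
    proof (rule ccontr)
      assume "\<not> xs i < hi i"
      then have "xs i = hi i" using xs_hi[of i] by simp
      then have "Rs a d k xs i \<le> Rs a d k hi i"
        using xs_hi[of "i+1"] xs_hi[of "i-1"] d0 k0 by (intro Rs_mono) auto
      then show False using sup r by (smt (verit))
    qed
    define \<epsilon> where "\<epsilon> = min (hi i - xs i) (Rs a d k xs i / M)"
    have \<epsilon>0: "\<epsilon> > 0" unfolding \<epsilon>_def using lt r M0 by simp
    have \<epsilon>1: "xs i + \<epsilon> \<le> hi i" unfolding \<epsilon>_def by simp
    have \<epsilon>2: "M * \<epsilon> \<le> Rs a d k xs i" unfolding \<epsilon>_def using M0
      by (smt (verit) min.cobounded2 mult_left_mono nonzero_mult_div_cancel_left times_divide_eq_right)
    define x' where "x' = xs(i := xs i + \<epsilon>)"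
    have x'ge: "xs j \<le> x' j" for j unfolding x'_def using \<epsilon>0 by simp
    have x'P: "x' \<in> P"
    proof -
      have bnd: "lo j \<le> x' j \<and> x' j \<le> hi j" for j
        using lo_xs[of j] xs_hi[of j] x'ge[of j] \<epsilon>1 unfolding x'_def by auto
      have R: "Rs a d k x' j \<ge> 0" for j
      proof (cases "j = i")
        case True
        have n1: "x' (i + 1) = xs (i + 1)" "x' (i - 1) = xs (i - 1)" "x' i = xs i + \<epsilon>"
          unfolding x'_def by simp_all
        have "0 \<le> xs i + \<epsilon>" "xs i + \<epsilon> \<le> 1" using xs01[of i] \<epsilon>0 \<epsilon>1 lh by (smt (verit))+
        then have "\<bar>H (xs i + \<epsilon>) - H (xs i)\<bar> \<le> M * \<bar>xs i + \<epsilon> - xs i\<bar>"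
          using Hlip xs01[of i] by blast
        then have "H (xs i + \<epsilon>) \<ge> H (xs i) - M * \<epsilon>" using \<epsilon>0 by simp
        then have "Rs a d k x' i \<ge> Rs a d k xs i - M * \<epsilon>"
          unfolding RH[of x'] RH[of xs] n1 by linarith
        then show ?thesis using True \<epsilon>2 by simp
      next
        case False
        have "Rs a d k xs j \<le> Rs a d k x' j"
          using False x'ge d0 k0 by (intro Rs_mono) (auto simp: x'_def)
        then show ?thesis using sub_xs[of j] by simp
      qed
      show ?thesis unfolding P_def using bnd R by auto
    qed
    have "x' i \<le> xs i" using upper[OF x'P] .
    moreover have "x' i = xs i + \<epsilon>" unfolding x'_def by simp
    ultimately show False using \<epsilon>0 by simp
  qed
  show ?thesis using lo_xs xs_hi eq by blast
qed



lemma dminus_bdd: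
  assumes "0 < a" "a < 1"
  shows "bdd_above ((\<lambda>y. gcub y a / y) ` {a<..<1})"
proof (rule bdd_aboveI[of _ 1])
  fix z assume "z \<in> (\<lambda>y. gcub y a / y) ` {a<..<1}"
  then obtain y where y: "a < y" "y < 1" "z = gcub y a / y" by auto
  have "y > 0" using y assms by simp
  then have "z = (1 - y) * (y - a)" unfolding y(3) gcub_def by simp
  moreover have "(1 - y) * (y - a) \<le> 1 * 1" using y assms by (intro mult_mono) auto
  ultimately show "z \<le> 1" by simp
qed

lemma dplus_bdd:
  assumes "0 < a" "a < 1" "k > 0"
  shows "bdd_above ((\<lambda>y. - gcub (1 - y) a / (k * y)) ` {1-a<..<1})"
proof (rule bdd_aboveI[of _ "1/k"])
  fix z assume "z \<in> (\<lambda>y. - gcub (1 - y) a / (k * y)) ` {1-a<..<1}"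
  then obtain y where y: "1 - a < y" "y < 1" "z = - gcub (1 - y) a / (k * y)" by auto
  have y0: "y > 0" using y assms by simp
  have "z = ((1 - y) * (a - (1 - y))) / k" unfolding y(3) gcub_def using y0 assms
    by (simp add: field_simps)
  moreover have "(1 - y) * (a - (1 - y)) \<le> 1 * 1" using y assms by (intro mult_mono) auto
  ultimately show "z \<le> 1/k" using assms by (simp add: divide_right_mono)
qed

lemma part2_exist:
  fixes a k d :: real and s :: "int \<Rightarrow> nat"
  assumes k0: "k > 0" and a0: "0 < a" and a1: "a < 1" and d0: "0 < d"
    and dlt: "d < d_zero a k" and s01: "\<forall>i. s i \<in> {0, 1}"
  shows "\<exists>\<Phi> :: real \<Rightarrow> real. (\<forall>\<xi>. lat_rhs a d k \<Phi> \<xi> = 0) \<and>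
               (\<forall>i. (s i = 0 \<longrightarrow> \<Phi> (of_int i) \<in> {0..<a}) \<and>
                    (s i = 1 \<longrightarrow> \<Phi> (of_int i) \<in> {a<..1}))"
proof -
  have "d * (k + 1) < min (k * d_plus a k) (d_minus a)"
    using dlt k0 unfolding d_zero_def by (simp add: field_simps)
  then have dm: "d * (k + 1) < d_minus a" and dp: "d * (k + 1) < k * d_plus a k" by auto
  obtain b1 where b1: "a < b1" "b1 < 1" "d * (k + 1) < gcub b1 a / b1"
    using dm unfolding d_minus_def using less_cSUP_iff[OF _ dminus_bdd[OF a0 a1]] a1 by auto
  have "d * (k + 1) / k < d_plus a k" using dp k0 by (simp add: field_simps)
  then obtain y0 where y0: "1 - a < y0" "y0 < 1" "d * (k + 1) / k < - gcub (1 - y0) a / (k * y0)"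
    unfolding d_plus_def using less_cSUP_iff[OF _ dplus_bdd[OF a0 a1 k0]] a0 by auto
  define b0 where "b0 = 1 - y0"
  have b0a: "0 < b0" "b0 < a" unfolding b0_def using y0 by auto
  have b1pos: "b1 > 0" using b1 a0 by simp
  have gb1: "gcub b1 a - d * (k + 1) * b1 > 0"
  proof -
    have "d * (k + 1) * b1 < gcub b1 a" using b1(3) b1pos by (simp add: pos_less_divide_eq)
    then show ?thesis by simp
  qed
  have gb0: "d * (k + 1) * (1 - b0) + gcub b0 a < 0"
  proof -
    have y0p: "y0 > 0" using y0 a1 by simp
    have "d * (k + 1) / k * (k * y0) < - gcub (1 - y0) a / (k * y0) * (k * y0)"
      using y0(3) y0p k0 by (intro mult_strict_right_mono) auto
    then have "d * (k + 1) * y0 < - gcub (1 - y0) a" using y0p k0 by simp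
    then show ?thesis unfolding b0_def by simp
  qed
  define lo where "lo i = (if s i = 0 then 0 else b1)" for i
  define hi where "hi i = (if s i = 0 then b0 else 1)" for i
  have lh: "\<forall>i. 0 \<le> lo i \<and> lo i \<le> hi i \<and> hi i \<le> 1"
    unfolding lo_def hi_def using b0a b1 b1pos by auto
  have lo01: "0 \<le> lo i" for i using lh by blast
  have hi1: "hi i \<le> 1" for i using lh by blast
  have sub: "\<forall>i. Rs a d k lo i \<ge> 0"
  proof
    fix i
    have "d * k * lo (i + 1) \<ge> 0" "d * lo (i - 1) \<ge> 0" using lo01 d0 k0 by simp_all
    moreover have "gcub (lo i) a - d * (k + 1) * lo i \<ge> 0"
      using gb1 unfolding lo_def by (simp add: gcub_def)
    ultimately show "Rs a d k lo i \<ge> 0" unfolding Rs_split by linarith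
  qed
  have sup: "\<forall>i. Rs a d k hi i \<le> 0"
  proof
    fix i
    have "d * k * hi (i + 1) \<le> d * k" "d * hi (i - 1) \<le> d" using hi1 d0 k0
      by (simp_all add: mult_left_le)
    moreover have "d * k + d + (gcub (hi i) a - d * (k + 1) * hi i) \<le> 0 \<or> s i \<noteq> 0"
      using gb0 unfolding hi_def by (auto simp: algebra_simps)
    moreover have "s i \<noteq> 0 \<Longrightarrow> gcub (hi i) a - d * (k + 1) * hi i = - d * (k + 1)"
      unfolding hi_def by (simp add: gcub_def)
    ultimately show "Rs a d k hi i \<le> 0" unfolding Rs_split by (cases "s i = 0") (auto simp: algebra_simps)
  qed
  obtain x where x: "\<forall>i. lo i \<le> x i \<and> x i \<le> hi i \<and> Rs a d k x i = 0"
    using perron[OF d0 k0 a0 a1 lh sub sup] by blast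
  define \<Phi> where "\<Phi> \<xi> = x \<lfloor>\<xi>\<rfloor>" for \<xi> :: real
  have sol: "lat_rhs a d k \<Phi> \<xi> = 0" for \<xi>
  proof -
    have "\<lfloor>\<xi> + 1\<rfloor> = \<lfloor>\<xi>\<rfloor> + 1" "\<lfloor>\<xi> - 1\<rfloor> = \<lfloor>\<xi>\<rfloor> - 1" by simp_all
    then have "lat_rhs a d k \<Phi> \<xi> = Rs a d k x \<lfloor>\<xi>\<rfloor>" unfolding lat_rhs_def Rs_def \<Phi>_def by simp
    then show ?thesis using x by simp
  qed
  have pat: "(s i = 0 \<longrightarrow> \<Phi> (of_int i) \<in> {0..<a}) \<and> (s i = 1 \<longrightarrow> \<Phi> (of_int i) \<in> {a<..1})" for i
    using x[rule_format, of i] b0a b1 unfolding \<Phi>_def lo_def hi_def by auto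
  show ?thesis using sol pat by blast
qed

lemma part2_inf:
  fixes a k d :: real
  shows "infinite {\<Phi> :: real \<Rightarrow> real. bounded (range \<Phi>) \<and> (\<forall>\<xi>. lat_rhs a d k \<Phi> \<xi> = 0)}"
proof -
  define F where "F t = (\<lambda>\<xi>::real. if frac \<xi> = t then 1 else (0::real))" for t :: real
  have sol: "F t \<in> {\<Phi> :: real \<Rightarrow> real. bounded (range \<Phi>) \<and> (\<forall>\<xi>. lat_rhs a d k \<Phi> \<xi> = 0)}" for t
  proof -
    have "range (F t) \<subseteq> {0, 1}" unfolding F_def by auto
    then have "bounded (range (F t))" by (meson bounded_subset finite.emptyI finite.insertI finite_imp_bounded)
    moreover have "lat_rhs a d k (F t) \<xi> = 0" for \<xi>
    proof -
      have f1: "frac (\<xi> + 1) = frac \<xi>" by (rule frac_1_eq)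
      have f2: "frac (\<xi> - 1) = frac \<xi>" using frac_1_eq[of "\<xi> - 1"] by simp
      show ?thesis unfolding lat_rhs_def F_def f1 f2 by (simp add: gcub_def)
    qed
    ultimately show ?thesis by simp
  qed
  have inj: "inj_on F {0<..<1}"
  proof (rule inj_onI)
    fix t t' :: real assume "t \<in> {0<..<1}" "t' \<in> {0<..<1}" "F t = F t'"
    then have "F t t = F t' t" by simp
    moreover have "frac t = t" using \<open>t \<in> {0<..<1}\<close> by (simp add: frac_eq)
    ultimately show "t = t'" unfolding F_def by (auto split: if_splits)
  qed
  have "infinite (F ` {0<..<1::real})"
    using finite_imageD[OF _ inj] infinite_Ioo[of "0::real" 1] by auto
  moreover have "F ` {0<..<1} \<subseteq> {\<Phi> :: real \<Rightarrow> real. bounded (range \<Phi>) \<and> (\<forall>\<xi>. lat_rhs a d k \<Phi> \<xi> = 0)}"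
    using sol by blast
  ultimately show ?thesis using infinite_super by blast
qed


theorem proposition2p8:
  fixes a k :: real
  assumes "k > 0" and "0 < a" and "a < 1"
  shows
    "(\<forall>d c \<Phi>. 0 < d \<and> d < min (a^2 / (4 * k)) ((1 - a)^2 / 4) \<and> tw_solution a d k c \<Phi>
         \<longrightarrow> c = 0)
   \<and> (\<forall>d. 0 < d \<and> d < d_zero a k \<longrightarrow>
         (\<forall>s :: int \<Rightarrow> nat. (\<forall>i. s i \<in> {0, 1}) \<longrightarrow>
            (\<exists>\<Phi> :: real \<Rightarrow> real. (\<forall>\<xi>. lat_rhs a d k \<Phi> \<xi> = 0) \<and>
               (\<forall>i. (s i = 0 \<longrightarrow> \<Phi> (of_int i) \<in> {0..<a}) \<and>
                    (s i = 1 \<longrightarrow> \<Phi> (of_int i) \<in> {a<..1}))))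
         \<and> infinite {\<Phi> :: real \<Rightarrow> real. bounded (range \<Phi>) \<and> (\<forall>\<xi>. lat_rhs a d k \<Phi> \<xi> = 0)})
   \<and> (\<forall>d c \<Phi>. k > 1 \<and> d > a^2 / (4 * (sqrt k - 1)^2) \<and> tw_solution a d k c \<Phi>
         \<longrightarrow> c < 0)"
proof (intro conjI allI impI)
  fix d c :: real and \<Phi> :: "real \<Rightarrow> real"
  assume h: "0 < d \<and> d < min (a^2 / (4 * k)) ((1 - a)^2 / 4) \<and> tw_solution a d k c \<Phi>"
  then show "c = 0" using part1[OF assms(1) assms(2) assms(3)] by blast
next
  fix d :: real and s :: "int \<Rightarrow> nat"
  assume "0 < d \<and> d < d_zero a k" "\<forall>i. s i \<in> {0, 1}"
  then show "\<exists>\<Phi> :: real \<Rightarrow> real. (\<forall>\<xi>. lat_rhs a d k \<Phi> \<xi> = 0) \<and>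
               (\<forall>i. (s i = 0 \<longrightarrow> \<Phi> (of_int i) \<in> {0..<a}) \<and>
                    (s i = 1 \<longrightarrow> \<Phi> (of_int i) \<in> {a<..1}))"
    using part2_exist[OF assms(1) assms(2) assms(3)] by blast
next
  fix d :: real
  show "infinite {\<Phi> :: real \<Rightarrow> real. bounded (range \<Phi>) \<and> (\<forall>\<xi>. lat_rhs a d k \<Phi> \<xi> = 0)}"
    by (rule part2_inf)
next
  fix d c :: real and \<Phi> :: "real \<Rightarrow> real"
  assume "k > 1 \<and> d > a^2 / (4 * (sqrt k - 1)^2) \<and> tw_solution a d k c \<Phi>"
  then show "c < 0" using part3[OF _ assms(2) assms(3)] by blast
qed

end
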